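(* Let $P$ be the transition matrix of a reducible classical Markov chain on a countable state space $\Lambda$, and consider the associated OQRW with $\mathcal H=\mathbb C$, $\mathcal K=\ell^2(\Lambda)$, $B^i_j=\sqrt{P(j,i)}U^i_j$ ($|U^i_j|=1$). Then there exists an initial probability measure $\rho^{(0)}$ on $\Lambda$ such that the QMC $(\rho^{(0)},(\mathcal E^{(n)})_{n\ge0})$ associated with this OQRW is reducible.
   Context: A stochastic matrix $P$ has nonnegative entries with $\sum_jP(i,j)=1$. $i\to j$ means $P^n(i,j)>0$ for some $n\in\mathbb N$; the chain is irreducible if $i\to j$ and $j\to i$ for all $i,j\in\Lambda$, and reducible otherwise. States of $\mathcal B$ are probability measures $\rho=(\rho_i)$ identified with $\sum_i\rho_i|i\rangle\langle i|$. The OQRW: $\mathcal M(\rho)=\sum_i(\sum_jB^i_j\rho_j\overline{B^i_j})|i\rangle\langle i|$, $\rho^{(n)}=\mathcal M^n(\rho^{(0)})$, $\Lambda(\rho^{(n)})=\{i:\rho^{(n)}_i\ne0\}$, $M^i_j=B^i_j|i\rangle\langle j|$. $\mathcal B$ is the commutative algebra of bounded diagonal operators $x=\sum_jx_j|j\rangle\langle j|$ on $\ell^2(\Lambda)$, $\mathcal A=\bigotimes_{k\in\mathbb Z_+}\mathcal B$. Transition expectations: $\mathcal E^{(n)}(x\otimes y)=\sum_{j\in\Lambda(\rho^{(n)})}\sum_i\frac{\mathrm{Tr}((\rho^{(n)}_j|j\rangle\langle j|)x)}{\rho^{(n)}_j}{M^i_j}^*yM^i_j$ (equivalently $\mathcal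 E^{(n)}(x\otimes y)=P_{\rho^{(n)}}xPy$ with $P_{\rho^{(n)}}$ the indicator of the support of $\rho^{(n)}$ and $(Py)_j=\sum_iP(j,i)y_i$). $\bar b(n)$ is the strong limit as $k\to\infty$ of $\mathcal E^{(n)}(I\otimes\cdots\otimes\mathcal E^{(n+k)}(I\otimes I))$; $E_{0]}(a_0\otimes\cdots\otimes a_n\otimes I\otimes\cdots)=\mathcal E^{(0)}(a_0\otimes\cdots\otimes\mathcal E^{(n)}(a_n\otimes\bar b(n+1)))$, extended to $\mathcal A$ by limits. The QMC is reducible if there exist a projection $p\in\mathcal B$, $p\ne0,I$, and $n_0$ with $E_{0]}(p_{[n_0}ap_{[n_0})=E_{0]}(a)$ for all $a\in\mathcal A$, where $p_{[n}=I\otimes\cdots\otimes I\otimes p\otimes p\otimes\cdots$ ($p$ from the $n$-th position on); otherwise irreducible. *)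

theory Defs
  imports "HOL-Analysis.Analysis"
begin

definition stochastic :: "('a \<Rightarrow> 'a \<Rightarrow> real) \<Rightarrow> bool" where
  "stochastic P \<longleftrightarrow> (\<forall>i j. 0 \<le> P i j) \<and> (\<forall>i. ((\<lambda>j. P i j) has_sum 1) UNIV)"

fun mpow :: "('a \<Rightarrow> 'a \<Rightarrow> real) \<Rightarrow> nat \<Rightarrow> 'a \<Rightarrow> 'a \<Rightarrow> real" where
  "mpow P 0 i j = (if i = j then 1 else 0)"
| "mpow P (Suc n) i j = (\<Sum>\<^sub>\<infinity>k. mpow P n i k * P k j)"

definition leadsto :: "('a \<Rightarrow> 'a \<Rightarrow> real) \<Rightarrow> 'a \<Rightarrow> 'a \<Rightarrow> bool" where
  "leadsto P i j \<longleftrightarrow> (\<exists>n\<ge>1. 0 < mpow P n i j)"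

definition irreducible_chain :: "('a \<Rightarrow> 'a \<Rightarrow> real) \<Rightarrow> bool" where
  "irreducible_chain P \<longleftrightarrow> (\<forall>i j. leadsto P i j \<and> leadsto P j i)"

definition oqrwB :: "('a \<Rightarrow> 'a \<Rightarrow> real) \<Rightarrow> ('a \<Rightarrow> 'a \<Rightarrow> complex) \<Rightarrow> 'a \<Rightarrow> 'a \<Rightarrow> complex" where
  "oqrwB P U i j = complex_of_real (sqrt (P j i)) * U i j"

text \<open>rho^(n) = M^n(rho^(0)); a diagonal state is stored as its diagonal.\<close>
fun rho :: "('a \<Rightarrow> 'a \<Rightarrow> real) \<Rightarrow> ('a \<Rightarrow> 'a \<Rightarrow> complex) \<Rightarrow> ('a \<Rightarrow> real) \<Rightarrow> nat \<Rightarrow> 'a \<Rightarrow> complex" where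
  "rho P U r0 0 i = complex_of_real (r0 i)"
| "rho P U r0 (Suc n) i =
     (\<Sum>\<^sub>\<infinity>j. oqrwB P U i j * rho P U r0 n j * cnj (oqrwB P U i j))"

text \<open>Transition expectation E^(n)(x \<otimes> y), diagonal operators stored as diagonals:
  sum over j in Lambda(rho^(n)) and i of (Tr(rho_j |j><j| x)/rho_j) (M^i_j)^* y M^i_j.\<close>
definition Etr :: "('a \<Rightarrow> 'a \<Rightarrow> real) \<Rightarrow> ('a \<Rightarrow> 'a \<Rightarrow> complex) \<Rightarrow> ('a \<Rightarrow> real) \<Rightarrow> nat
    \<Rightarrow> ('a \<Rightarrow> complex) \<Rightarrow> ('a \<Rightarrow> complex) \<Rightarrow> ('a \<Rightarrow> complex)" where
  "Etr P U r0 n x y = (\<lambda>j. if rho P U r0 n j \<noteq> 0 then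
      (\<Sum>\<^sub>\<infinity>i. (rho P U r0 n j * x j / rho P U r0 n j) *
                 (cnj (oqrwB P U i j) * y i * oqrwB P U i j))
    else 0)"

text \<open>chainE n k = E^(n)(I \<otimes> E^(n+1)(I \<otimes> ... E^(n+k)(I \<otimes> I))).\<close>
fun chainE :: "('a \<Rightarrow> 'a \<Rightarrow> real) \<Rightarrow> ('a \<Rightarrow> 'a \<Rightarrow> complex) \<Rightarrow> ('a \<Rightarrow> real) \<Rightarrow> nat \<Rightarrow> nat \<Rightarrow> 'a \<Rightarrow> complex" where
  "chainE P U r0 n 0 = Etr P U r0 n (\<lambda>_. 1) (\<lambda>_. 1)"
| "chainE P U r0 n (Suc k) = Etr P U r0 n (\<lambda>_. 1) (chainE P U r0 (Suc n) k)"

text \<open>bbar(n): strong limit of diagonal operators = entrywise limit.\<close>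
definition bbar :: "('a \<Rightarrow> 'a \<Rightarrow> real) \<Rightarrow> ('a \<Rightarrow> 'a \<Rightarrow> complex) \<Rightarrow> ('a \<Rightarrow> real) \<Rightarrow> nat \<Rightarrow> 'a \<Rightarrow> complex" where
  "bbar P U r0 n = (\<lambda>j. lim (\<lambda>k. chainE P U r0 n k j))"

text \<open>Enest a l d = E^(l)(a_l \<otimes> E^(l+1)(... E^(l+d)(a_(l+d) \<otimes> bbar(l+d+1)))).\<close>
fun Enest :: "('a \<Rightarrow> 'a \<Rightarrow> real) \<Rightarrow> ('a \<Rightarrow> 'a \<Rightarrow> complex) \<Rightarrow> ('a \<Rightarrow> real) \<Rightarrow> (nat \<Rightarrow> 'a \<Rightarrow> complex)
    \<Rightarrow> nat \<Rightarrow> nat \<Rightarrow> 'a \<Rightarrow> complex" where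
  "Enest P U r0 a l 0 = Etr P U r0 l (a l) (bbar P U r0 (Suc l))"
| "Enest P U r0 a l (Suc d) = Etr P U r0 l (a l) (Enest P U r0 a (Suc l) d)"

text \<open>E_{0]}(a_0 \<otimes> ... \<otimes> a_m \<otimes> I \<otimes> ...).\<close>
definition E0 :: "('a \<Rightarrow> 'a \<Rightarrow> real) \<Rightarrow> ('a \<Rightarrow> 'a \<Rightarrow> complex) \<Rightarrow> ('a \<Rightarrow> real) \<Rightarrow> (nat \<Rightarrow> 'a \<Rightarrow> complex)
    \<Rightarrow> nat \<Rightarrow> 'a \<Rightarrow> complex" where
  "E0 P U r0 a m = Enest P U r0 a 0 m"

definition extI :: "(nat \<Rightarrow> 'a \<Rightarrow> complex) \<Rightarrow> nat \<Rightarrow> nat \<Rightarrow> 'a \<Rightarrow> complex" where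
  "extI a m = (\<lambda>k. if k \<le> m then a k else (\<lambda>_. 1))"

definition pcut :: "('a \<Rightarrow> complex) \<Rightarrow> nat \<Rightarrow> (nat \<Rightarrow> 'a \<Rightarrow> complex) \<Rightarrow> nat \<Rightarrow> 'a \<Rightarrow> complex" where
  "pcut p n0 b = (\<lambda>k j. if n0 \<le> k then p j * b k j * p j else b k j)"

text \<open>Reducibility of the QMC; E_{0]}(p_{[n0} a p_{[n0}) is the limit of E_{0]} applied to
  the truncations p_{[n0,N]} a p_{[n0,N]}, for local elementary tensors a.\<close>
definition qmc_reducible :: "('a \<Rightarrow> 'a \<Rightarrow> real) \<Rightarrow> ('a \<Rightarrow> 'a \<Rightarrow> complex) \<Rightarrow> ('a \<Rightarrow> real) \<Rightarrow> bool" where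
  "qmc_reducible P U r0 \<longleftrightarrow>
    (\<exists>(p :: 'a \<Rightarrow> complex) (n0 :: nat).
       (\<forall>j. cnj (p j) = p j \<and> p j * p j = p j) \<and> p \<noteq> (\<lambda>_. 0) \<and> p \<noteq> (\<lambda>_. 1) \<and>
       (\<forall>(a :: nat \<Rightarrow> 'a \<Rightarrow> complex) (m :: nat).
          (\<forall>k\<le>m. bounded (range (a k))) \<longrightarrow>
          (\<forall>j. (\<lambda>N. E0 P U r0 (pcut p n0 (extI a m)) N j) \<longlonglongrightarrow> E0 P U r0 a m j)))"

end

theory Submission
  imports Defs
begin

lemma single_has_sum:
  fixes v :: "'b::{comm_monoid_add, topological_space}"
  shows "((\<lambda>j. if j = c then v else 0) has_sum v) UNIV"
proof -
  have "((\<lambda>j. if j = c then v else 0) has_sum v) {c}"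
    using has_sum_finite[of "{c}" "\<lambda>j. if j = c then v else 0"] by simp
  then show ?thesis
    by (subst (asm) has_sum_cong_neutral[where g="\<lambda>j. if j = c then v else 0" and T=UNIV]) auto
qed

lemma stoch_le1:
  assumes "stochastic P" shows "P j k \<le> 1"
proof -
  have "((\<lambda>k. P j k) has_sum 1) UNIV" "\<forall>k. 0 \<le> P j k" using assms by (auto simp: stochastic_def)
  then have "sum (\<lambda>k. P j k) {k} \<le> 1"
    by (intro finite_sum_le_has_sum[where f="\<lambda>k. P j k" and S=1 and A=UNIV]) auto
  then show ?thesis by simp
qed

lemma stoch_finsum_le1:
  assumes "stochastic P" "finite F" shows "sum (P j) F \<le> 1"
proof -
  have "((\<lambda>k. P j k) has_sum 1) UNIV" "\<forall>k. 0 \<le> P j k" using assms by (auto simp: stochastic_def)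
  then show ?thesis using assms(2)
    by (intro finite_sum_le_has_sum[where f="\<lambda>k. P j k" and S=1 and A=UNIV]) auto
qed

lemma mpow_nonneg:
  assumes "stochastic P" shows "0 \<le> mpow P n i k"
  using assms by (induction n arbitrary: k) (auto simp: stochastic_def intro!: infsum_nonneg)

lemma finsum_summable:
  fixes f :: "'a \<Rightarrow> 'b \<Rightarrow> real"
  assumes "finite F" "\<And>k. k \<in> F \<Longrightarrow> (\<lambda>j. f j k) summable_on A"
  shows "(\<lambda>j. \<Sum>k\<in>F. f j k) summable_on A"
  using assms
proof (induction F rule: finite_induct)
  case empty then show ?case by simp
next
  case (insert x F) then show ?case by (simp add: summable_on_add)
qed

lemma finsum_infsum:
  fixes f :: "'a \<Rightarrow> 'b \<Rightarrow> real"
  assumes "finite F" "\<And>k. k \<in> F \<Longrightarrow> (\<lambda>j. f j k) summable_on A"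
  shows "(\<Sum>k\<in>F. infsum (\<lambda>j. f j k) A) = infsum (\<lambda>j. \<Sum>k\<in>F. f j k) A"
  using assms
proof (induction F rule: finite_induct)
  case empty then show ?case by simp
next
  case (insert x F)
  have s: "(\<lambda>j. \<Sum>k\<in>F. f j k) summable_on A"
    using insert by (intro finsum_summable) auto
  show ?case using insert s
    by (simp add: infsum_add)
qed

lemma prod_summable:
  fixes q c :: "'a \<Rightarrow> real"
  assumes "q summable_on UNIV" "\<And>j. 0 \<le> q j" "\<And>j. 0 \<le> c j" "\<And>j. c j \<le> 1"
  shows "(\<lambda>j. q j * c j) summable_on UNIV"
proof (rule summable_on_comparison_test[OF assms(1)])
  fix j
  show "q j * c j \<le> q j" using assms(4)[of j] assms(2)[of j] by (rule mult_left_le)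
  show "0 \<le> q j * c j" using assms(2)[of j] assms(3)[of j] by (rule mult_nonneg_nonneg)
qed

lemma mpow_row:
  assumes "stochastic P"
  shows "(\<lambda>k. mpow P n i k) summable_on UNIV \<and> infsum (\<lambda>k. mpow P n i k) UNIV \<le> 1"
proof (induction n)
  case 0
  have e: "(\<lambda>k. mpow P 0 i k) = (\<lambda>k. if k = i then 1 else 0)" by (auto intro!: ext)
  have h: "((\<lambda>k. mpow P 0 i k) has_sum 1) UNIV"
    unfolding e by (rule single_has_sum)
  have "(\<lambda>k. mpow P 0 i k) summable_on UNIV" "infsum (\<lambda>k. mpow P 0 i k) UNIV = 1"
    using h by (auto simp only: summable_on_def intro: infsumI)
  then show ?case by (simp only: order_refl conj_absorb)
next
  case (Suc n)
  have sm: "(\<lambda>j. mpow P n i j * P j k) summable_on UNIV" for k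
    using Suc
    by (intro prod_summable[where q="\<lambda>j. mpow P n i j"] mpow_nonneg[OF assms] stoch_le1[OF assms])
       (auto simp: assms[unfolded stochastic_def])
  have fs: "sum (\<lambda>k. mpow P (Suc n) i k) F \<le> 1" if "finite F" for F
  proof -
    have "sum (\<lambda>k. mpow P (Suc n) i k) F = infsum (\<lambda>j. \<Sum>k\<in>F. mpow P n i j * P j k) UNIV"
      using finsum_infsum[OF that, of "\<lambda>j k. mpow P n i j * P j k" UNIV] sm by simp
    also have "\<dots> = infsum (\<lambda>j. mpow P n i j * sum (P j) F) UNIV"
      by (simp add: sum_distrib_left)
    also have "\<dots> \<le> infsum (\<lambda>j. mpow P n i j) UNIV"
    proof (rule infsum_mono_neutral)
      show "(\<lambda>j. mpow P n i j * sum (P j) F) summable_on UNIV"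
        using Suc
        by (intro prod_summable[where q="\<lambda>j. mpow P n i j"] mpow_nonneg[OF assms]
              stoch_finsum_le1[OF assms that] sum_nonneg)
           (auto simp: assms[unfolded stochastic_def])
      show "(\<lambda>j. mpow P n i j) summable_on UNIV" using Suc by simp
      fix j
      show "mpow P n i j * sum (P j) F \<le> mpow P n i j"
        using stoch_finsum_le1[OF assms that, of j] mpow_nonneg[OF assms, of n i j] by (rule mult_left_le)
    qed auto
    also have "\<dots> \<le> 1" using Suc by simp
    finally show ?thesis .
  qed
  have smS: "(\<lambda>k. mpow P (Suc n) i k) summable_on UNIV"
    by (rule nonneg_bdd_above_summable_on)
       (auto intro!: mpow_nonneg[OF assms] bdd_aboveI[where M=1] fs simp del: mpow.simps)
  then show ?case
    by (auto intro!: infsum_le_finite_sums fs simp del: mpow.simps)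
qed

lemma mpow_pos:
  assumes "stochastic P" "0 < mpow P n i j" "0 < P j k"
  shows "0 < mpow P (Suc n) i k"
proof -
  have sm: "(\<lambda>j. mpow P n i j * P j k) summable_on UNIV"
    using mpow_row[OF assms(1), of n i]
    by (intro prod_summable[where q="\<lambda>j. mpow P n i j"] mpow_nonneg[OF assms(1)] stoch_le1[OF assms(1)])
       (auto simp: assms(1)[unfolded stochastic_def])
  have "sum (\<lambda>j. mpow P n i j * P j k) {j} \<le> mpow P (Suc n) i k"
    unfolding mpow.simps(2)
    by (rule finite_sum_le_has_sum[where A=UNIV])
       (use sm mpow_nonneg[OF assms(1)] assms(1)[unfolded stochastic_def] in auto)
  moreover have "0 < mpow P n i j * P j k" using assms by simp
  ultimately show ?thesis by simp
qed

lemma B_sq: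
  assumes "stochastic P" "\<forall>i j. cmod (U i j) = 1"
  shows "oqrwB P U k j * x * cnj (oqrwB P U k j) = complex_of_real (P j k) * x"
proof -
  have u: "U k j * cnj (U k j) = 1"
    using complex_norm_square[of "U k j"] assms(2) by simp
  have p: "0 \<le> P j k" using assms(1) by (simp add: stochastic_def)
  have "oqrwB P U k j * x * cnj (oqrwB P U k j)
     = complex_of_real (sqrt (P j k) * sqrt (P j k)) * (U k j * cnj (U k j)) * x"
    by (simp add: oqrwB_def algebra_simps del: real_sqrt_mult_self)
  also have "\<dots> = complex_of_real (P j k) * x"
    using u p by simp
  finally show ?thesis .
qed

lemma B_sq2:
  assumes "stochastic P" "\<forall>i j. cmod (U i j) = 1"
  shows "cnj (oqrwB P U i j) * y * oqrwB P U i j = complex_of_real (P j i) * y"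
  using B_sq[OF assms, where k=i and x=y and j=j] by (simp add: algebra_simps)

lemma rho_mpow:
  assumes "stochastic P" "\<forall>i j. cmod (U i j) = 1"
  shows "rho P U (mpow P 0 i0) n k = complex_of_real (mpow P n i0 k)"
proof (induction n arbitrary: k)
  case 0 then show ?case by simp
next
  case (Suc n)
  have sm: "(\<lambda>j. mpow P n i0 j * P j k) summable_on UNIV"
    using mpow_row[OF assms(1), of n i0]
    by (intro prod_summable[where q="\<lambda>j. mpow P n i0 j"] mpow_nonneg[OF assms(1)] stoch_le1[OF assms(1)])
       (auto simp: assms(1)[unfolded stochastic_def])
  have "rho P U (mpow P 0 i0) (Suc n) k = infsum (\<lambda>j. complex_of_real (mpow P n i0 j * P j k)) UNIV"
  proof -
    have "rho P U (mpow P 0 i0) (Suc n) k =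
       (\<Sum>\<^sub>\<infinity>j. oqrwB P U k j * rho P U (mpow P 0 i0) n j * cnj (oqrwB P U k j))"
      by (simp only: rho.simps)
    also have "\<dots> = infsum (\<lambda>j. complex_of_real (mpow P n i0 j * P j k)) UNIV"
      by (rule infsum_cong) (simp only: B_sq[OF assms] Suc.IH, simp add: mult.commute)
    finally show ?thesis .
  qed
  also have "\<dots> = complex_of_real (mpow P (Suc n) i0 k)"
    unfolding mpow.simps(2) by (rule infsumI[OF has_sum_of_real[OF has_sum_infsum[OF sm]]])
  finally show ?case .
qed

definition supp :: "('a \<Rightarrow> 'a \<Rightarrow> real) \<Rightarrow> ('a \<Rightarrow> 'a \<Rightarrow> complex) \<Rightarrow> ('a \<Rightarrow> real) \<Rightarrow> nat \<Rightarrow> 'a \<Rightarrow> complex" where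
  "supp P U r0 n = (\<lambda>j. if rho P U r0 n j \<noteq> 0 then 1 else 0)"

lemma Etr_one:
  assumes "stochastic P" "\<forall>i j. cmod (U i j) = 1"
    and "\<And>i. rho P U r0 n j \<noteq> 0 \<Longrightarrow> P j i \<noteq> 0 \<Longrightarrow> y i = 1"
  shows "Etr P U r0 n (\<lambda>_. 1) y j = supp P U r0 n j"
proof (cases "rho P U r0 n j = 0")
  case True then show ?thesis by (simp add: Etr_def supp_def)
next
  case False
  have e: "(rho P U r0 n j * 1 / rho P U r0 n j) * (cnj (oqrwB P U i j) * y i * oqrwB P U i j)
      = complex_of_real (P j i)" for i
    using False assms(3)[of i] by (auto simp: B_sq2[OF assms(1,2)])
  have h: "((\<lambda>i. P j i) has_sum 1) UNIV" using assms(1) by (simp add: stochastic_def)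
  have "Etr P U r0 n (\<lambda>_. 1) y j = (\<Sum>\<^sub>\<infinity>i. (rho P U r0 n j * 1 / rho P U r0 n j) *
                 (cnj (oqrwB P U i j) * y i * oqrwB P U i j))"
    using False by (simp add: Etr_def)
  also have "\<dots> = infsum (\<lambda>i. complex_of_real (P j i)) UNIV"
    by (rule infsum_cong) (rule e)
  also have "\<dots> = 1" using infsumI[OF has_sum_of_real[OF h]] by simp
  finally show ?thesis using False by (simp add: supp_def)
qed

context
  fixes P :: "'a \<Rightarrow> 'a \<Rightarrow> real" and U :: "'a \<Rightarrow> 'a \<Rightarrow> complex" and r0 :: "'a \<Rightarrow> real"
  assumes st: "stochastic P" and uu: "\<forall>i j. cmod (U i j) = 1"
    and SP: "\<And>n j i. rho P U r0 n j \<noteq> 0 \<Longrightarrow> P j i \<noteq> 0 \<Longrightarrow> rho P U r0 (Suc n) i \<noteq> 0"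
begin

lemma Etr_supp: "Etr P U r0 n (\<lambda>_. 1) (supp P U r0 (Suc n)) = supp P U r0 n"
  by (rule ext, rule Etr_one[OF st uu]) (auto simp: supp_def dest: SP)

lemma chainE_supp: "chainE P U r0 n k = supp P U r0 n"
proof (induction k arbitrary: n)
  case 0 show ?case unfolding chainE.simps by (rule ext, rule Etr_one[OF st uu]) auto
next
  case (Suc k) then show ?case by (simp add: Etr_supp)
qed

lemma bbar_supp: "bbar P U r0 n = supp P U r0 n"
  by (simp add: bbar_def chainE_supp)

lemma Enest_ident: "(\<forall>k\<ge>l. c k = (\<lambda>_. 1)) \<Longrightarrow> Enest P U r0 c l d = supp P U r0 l"
proof (induction d arbitrary: l)
  case 0 then show ?case by (simp add: bbar_supp Etr_supp)
next
  case (Suc d) then show ?case by (simp add: Etr_supp)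
qed

lemma Enest_ext:
  "l \<le> m \<Longrightarrow> m - l \<le> d \<Longrightarrow> Enest P U r0 (extI a m) l d = Enest P U r0 a l (m - l)"
proof (induction d arbitrary: l)
  case 0 then show ?case by (simp add: extI_def)
next
  case (Suc d)
  show ?case
  proof (cases "l = m")
    case True
    have "Enest P U r0 (extI a m) (Suc l) d = supp P U r0 (Suc l)"
      using True by (intro Enest_ident) (auto simp: extI_def)
    then show ?thesis using True by (simp add: extI_def bbar_supp)
  next
    case False
    then have "m - l = Suc (m - Suc l)" using Suc.prems by simp
    then show ?thesis using Suc False by (simp add: extI_def)
  qed
qed

end

lemma Etr_cong:
  "(\<And>j. rho P U r0 n j \<noteq> 0 \<Longrightarrow> x j = x' j) \<Longrightarrow> Etr P U r0 n x y = Etr P U r0 n x' y"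
  by (auto simp: Etr_def)

lemma Enest_cong:
  "(\<And>l j. rho P U r0 l j \<noteq> 0 \<Longrightarrow> a l j = b l j) \<Longrightarrow> Enest P U r0 a l d = Enest P U r0 b l d"
proof (induction d arbitrary: l)
  case 0 show ?case unfolding Enest.simps by (rule Etr_cong) (rule 0)
next
  case (Suc d)
  have e1: "Enest P U r0 a (Suc l) d = Enest P U r0 b (Suc l) d" by (rule Suc.IH) (rule Suc.prems)
  have e2: "Etr P U r0 l (a l) (Enest P U r0 a (Suc l) d) = Etr P U r0 l (b l) (Enest P U r0 a (Suc l) d)"
    by (rule Etr_cong) (rule Suc.prems)
  show ?case by (simp only: Enest.simps e2, simp only: e1)
qed

theorem mainTheorem13:
  fixes P :: "'a::countable \<Rightarrow> 'a \<Rightarrow> real"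
    and U :: "'a \<Rightarrow> 'a \<Rightarrow> complex"
  assumes "stochastic P"
    and "\<not> irreducible_chain P"
    and "\<forall>i j. cmod (U i j) = 1"
  shows "\<exists>r0 :: 'a \<Rightarrow> real. (\<forall>i. 0 \<le> r0 i) \<and> (r0 has_sum 1) UNIV \<and> qmc_reducible P U r0"
proof -
  have st: "stochastic P" and uu: "\<forall>i j. cmod (U i j) = 1" using assms by auto
  obtain i0 j0 where nl: "\<not> leadsto P i0 j0"
    using assms(2) unfolding irreducible_chain_def by blast
  define r0 where "r0 = mpow P 0 i0"
  define p :: "'a \<Rightarrow> complex" where "p = (\<lambda>k. if leadsto P i0 k then 1 else 0)"
  have rr: "rho P U r0 n k = complex_of_real (mpow P n i0 k)" for n k
    unfolding r0_def by (rule rho_mpow[OF st uu])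
  have SP: "rho P U r0 (Suc n) i \<noteq> 0" if "rho P U r0 n j \<noteq> 0" "P j i \<noteq> 0" for n j i
  proof -
    have "0 < mpow P n i0 j" using that(1) mpow_nonneg[OF st, of n i0 j] by (simp add: rr)
    moreover have "0 < P j i" using that(2) st by (simp add: stochastic_def order_less_le)
    ultimately have "0 < mpow P (Suc n) i0 i" by (rule mpow_pos[OF st])
    then show ?thesis unfolding rr by simp
  qed
  have r0nn: "\<forall>i. 0 \<le> r0 i" by (simp add: r0_def)
  have r0e: "r0 = (\<lambda>j. if j = i0 then 1 else 0)" by (auto simp: r0_def intro!: ext)
  have r0s: "(r0 has_sum 1) UNIV"
    using single_has_sum[of i0 "1::real"] by (simp only: r0e)
  obtain k where kpos: "0 < P i0 k"
  proof (rule ccontr)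
    assume "\<not> thesis"
    then have "\<forall>k. P i0 k = 0" using st that by (force simp: stochastic_def order_less_le)
    then have "((\<lambda>k. P i0 k) has_sum 0) UNIV" by simp
    moreover have "((\<lambda>k. P i0 k) has_sum 1) UNIV" using st by (simp add: stochastic_def)
    ultimately show False using has_sum_unique by fastforce
  qed
  have m1: "mpow P 1 i0 k = P i0 k"
  proof -
    have e: "(\<lambda>j. mpow P 0 i0 j * P j k) = (\<lambda>j. if j = i0 then P i0 k else 0)"
      by (auto intro!: ext)
    have "((\<lambda>j. mpow P 0 i0 j * P j k) has_sum P i0 k) UNIV"
      unfolding e by (rule single_has_sum)
    then show ?thesis by (simp add: infsumI)
  qed
  have pk: "p k = 1" using kpos m1 unfolding p_def leadsto_def by (auto intro!: exI[of _ 1])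
  have pj: "p j0 = 0" using nl by (simp add: p_def)
  have conv: "(\<lambda>N. E0 P U r0 (pcut p 1 (extI a m)) N j) \<longlonglongrightarrow> E0 P U r0 a m j" for a m j
  proof (rule tendsto_eventually, unfold eventually_sequentially, intro exI allI impI)
    fix N assume "m \<le> N"
    have "E0 P U r0 (pcut p 1 (extI a m)) N = Enest P U r0 (extI a m) 0 N"
      unfolding E0_def
    proof (rule Enest_cong)
      fix l j assume h: "rho P U r0 l j \<noteq> 0"
      show "pcut p 1 (extI a m) l j = extI a m l j"
      proof (cases "l = 0")
        case True then show ?thesis by (simp add: pcut_def)
      next
        case False
        have "0 < mpow P l i0 j" using h mpow_nonneg[OF st, of l i0 j] by (simp add: rr)
        then have "leadsto P i0 j" using False unfolding leadsto_def by (auto intro!: exI[of _ l])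
        then show ?thesis using False by (simp add: pcut_def p_def)
      qed
    qed
    also have "\<dots> = Enest P U r0 a 0 m"
      using Enest_ext[OF st uu SP, where l=0 and m=m and d=N and a=a] \<open>m \<le> N\<close> by simp
    finally show "E0 P U r0 (pcut p 1 (extI a m)) N j = E0 P U r0 a m j"
      by (simp add: E0_def)
  qed
  have "qmc_reducible P U r0"
    unfolding qmc_reducible_def
  proof (intro exI[of _ p] exI[of _ "1::nat"] conjI allI impI)
    show "cnj (p j) = p j" for j by (simp add: p_def)
    show "p j * p j = p j" for j by (simp add: p_def)
    show "p \<noteq> (\<lambda>_. 0)" using pk by auto
    show "p \<noteq> (\<lambda>_. 1)" using pj by (metis zero_neq_one)
  qed (rule conv)
  then show ?thesis using r0nn r0s by blast
qed

end
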